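(* Let $f:\mathbb{R}^2\to\mathbb{R}^2$ be a homeomorphism and let $x\in\mathbb{R}^2$ satisfy $\omega(x)=\emptyset$. Then there exists a continuous positive map $\epsilon:\mathbb{R}^2\to\mathbb{R}$ such that for every $y\neq x$ there exists $n>0$ with $\|f^n(x)-f^n(y)\|>\epsilon(f^n(x))$. In particular, if $(x_n)_{n\in\mathbb{Z}}$ is a pseudo-orbit with $x_n=f^n(x)$ for all $n\geq n_0$ (some $n_0$), then the only orbit that can $\epsilon$-shadow $(x_n)_{n\in\mathbb{Z}}$ is the orbit of $x$.
   Context: $\omega(x)$ is the $\omega$-limit set of $x$ under $f$. For a continuous positive $\delta$, a $\delta$-pseudo-orbit is a sequence $(x_n)_{n\in\mathbb{Z}}$ with $\|f(x_n)-x_{n+1}\|<\delta(f(x_n))$ for all $n$; it is $\epsilon$-shadowed by the orbit of a point $w$ if $\|x_n-f^n(w)\|<\epsilon(x_n)$ for all $n\in\mathbb{Z}$. *)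

theory Defs
  imports "HOL-Analysis.Analysis"
begin

definition omega_limit :: "('a::topological_space \<Rightarrow> 'a) \<Rightarrow> 'a \<Rightarrow> 'a set" where
  "omega_limit f x = {y. \<exists>r. strict_mono r \<and> ((\<lambda>k. (f ^^ r k) x) \<longlonglongrightarrow> y)}"

definition zpow :: "('a \<Rightarrow> 'a) \<Rightarrow> int \<Rightarrow> 'a \<Rightarrow> 'a" where
  "zpow f n = (if 0 \<le> n then f ^^ nat n else inv f ^^ nat (- n))"

definition pseudo_orbit :: "('a::real_normed_vector \<Rightarrow> 'a) \<Rightarrow> ('a \<Rightarrow> real) \<Rightarrow> (int \<Rightarrow> 'a) \<Rightarrow> bool" where
  "pseudo_orbit f \<delta> xs \<longleftrightarrow> (\<forall>n. norm (f (xs n) - xs (n + 1)) < \<delta> (f (xs n)))"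

definition shadows :: "('a::real_normed_vector \<Rightarrow> 'a) \<Rightarrow> ('a \<Rightarrow> real) \<Rightarrow> (int \<Rightarrow> 'a) \<Rightarrow> 'a \<Rightarrow> bool" where
  "shadows f \<epsilon> xs w \<longleftrightarrow> (\<forall>n. norm (xs n - zpow f n w) < \<epsilon> (xs n))"

end

theory Submission
  imports Defs "HOL-Library.Infinite_Set"
begin

lemma funpow_cont:
  fixes g :: "'a::topological_space \<Rightarrow> 'a"
  assumes "continuous_on UNIV g"
  shows "continuous_on UNIV (g ^^ k)"
proof (induction k)
  case 0 then show ?case by (simp add: continuous_on_id)
next
  case (Suc k)
  have "continuous_on UNIV (g \<circ> (g ^^ k))"
    by (rule continuous_on_compose) (use Suc assms in \<open>auto intro: continuous_on_subset\<close>)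
  then show ?case by simp
qed

lemma funpow_inv:
  fixes f g :: "'a \<Rightarrow> 'a"
  assumes "\<And>y. g (f y) = y"
  shows "(g ^^ k) ((f ^^ k) y) = y"
proof (induction k)
  case 0 then show ?case by simp
next
  case (Suc k)
  have "(g ^^ Suc k) ((f ^^ Suc k) y) = (g ^^ k) (g (f ((f ^^ k) y)))"
  proof -
    have "g ^^ Suc k = (g ^^ k) \<circ> g" by (rule funpow_Suc_right)
    then show ?thesis by simp
  qed
  then show ?case using Suc assms by simp
qed

theorem mainTheorem9:
  fixes f :: "real^2 \<Rightarrow> real^2" and x :: "real^2"
  assumes hom: "\<exists>g. homeomorphism UNIV UNIV f g"
    and om: "omega_limit f x = {}"
  shows "\<exists>\<epsilon> :: real^2 \<Rightarrow> real. continuous_on UNIV \<epsilon> \<and> (\<forall>z. 0 < \<epsilon> z) \<and>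
     (\<forall>y. y \<noteq> x \<longrightarrow> (\<exists>n::nat. n > 0 \<and> norm ((f ^^ n) x - (f ^^ n) y) > \<epsilon> ((f ^^ n) x))) \<and>
     (\<forall>\<delta> xs n0 w. continuous_on UNIV \<delta> \<and> (\<forall>z. 0 < \<delta> z) \<and> pseudo_orbit f \<delta> xs \<and>
        (\<forall>n::int. n \<ge> n0 \<longrightarrow> xs n = zpow f n x) \<and> shadows f \<epsilon> xs w \<longrightarrow> w = x)"
proof -
  obtain g where hg: "homeomorphism UNIV UNIV f g" using hom by blast
  have gf: "\<And>y. g (f y) = y" using hg by (simp add: homeomorphism_def)
  have gc: "continuous_on UNIV g" using hg by (simp add: homeomorphism_def)
  define X where "X k = (f ^^ k) x" for k
  have "\<forall>n. \<exists>d>0. \<forall>z. dist z (X (Suc n)) \<le> d \<longrightarrow> dist ((g ^^ Suc n) z) x < 1 / real (Suc n)"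
  proof
    fix n
    have c: "continuous_on UNIV (g ^^ Suc n)" by (rule funpow_cont[OF gc])
    have gx: "(g ^^ Suc n) (X (Suc n)) = x" unfolding X_def by (rule funpow_inv[of g f, OF gf])
    obtain d where d: "d > 0" "\<forall>z. dist z (X (Suc n)) < d \<longrightarrow>
        dist ((g ^^ Suc n) z) ((g ^^ Suc n) (X (Suc n))) < 1 / real (Suc n)"
      using c unfolding continuous_on_iff by (metis UNIV_I divide_pos_pos of_nat_0_less_iff zero_less_Suc zero_less_one)
    show "\<exists>d>0. \<forall>z. dist z (X (Suc n)) \<le> d \<longrightarrow> dist ((g ^^ Suc n) z) x < 1 / real (Suc n)"
      by (rule exI[of _ "d/2"]) (use d gx in auto)
  qed
  then obtain e where e: "\<And>n. e n > 0"
    "\<And>n z. dist z (X (Suc n)) \<le> e n \<Longrightarrow> dist ((g ^^ Suc n) z) x < 1 / real (Suc n)"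
    by metis
  have core: "y = x" if H: "\<And>n. n \<ge> M \<Longrightarrow> dist ((f ^^ Suc n) y) (X (Suc n)) \<le> e n" for y M
  proof (rule ccontr)
    assume "y \<noteq> x"
    then have "dist y x > 0" by simp
    then obtain k where k: "k > 0" "inverse (real k) < dist y x" using ex_inverse_of_nat_less by blast
    have "dist ((g ^^ Suc (M + k)) ((f ^^ Suc (M + k)) y)) x < 1 / real (Suc (M + k))"
      using e(2)[OF H[of "M + k"]] by simp
    then have "dist y x < 1 / real (Suc (M + k))" using funpow_inv[of g f, OF gf, of "Suc (M + k)" y] by metis
    moreover have "1 / real (Suc (M + k)) \<le> inverse (real k)"
      using k(1) by (simp add: divide_simps)
    ultimately show False using k by linarith
  qed
  define h where "h z = Inf (range (\<lambda>n. e n + dist z (X (Suc n))))" for z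
  have bdd: "bdd_below (range (\<lambda>n. e n + dist z (X (Suc n))))" for z
    by (rule bdd_belowI[of _ 0]) (use e(1) in \<open>auto intro!: add_nonneg_nonneg less_imp_le[OF e(1)]\<close>)
  have hle: "h z \<le> e n + dist z (X (Suc n))" for z n
    unfolding h_def by (rule cInf_lower[OF _ bdd]) auto
  have hX: "h (X (Suc n)) \<le> e n" for n using hle[of "X (Suc n)" n] by simp
  have lip: "h z \<le> h w + dist z w" for z w
  proof -
    have "h z - dist z w \<le> h w"
      unfolding h_def[of w]
    proof (rule cInf_greatest)
      show "range (\<lambda>n. e n + dist w (X (Suc n))) \<noteq> {}" by simp
      fix t assume "t \<in> range (\<lambda>n. e n + dist w (X (Suc n)))"
      then obtain n where "t = e n + dist w (X (Suc n))" by auto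
      then show "h z - dist z w \<le> t" using hle[of z n] dist_triangle[of z "X (Suc n)" w]
        by (simp add: dist_commute)
    qed
    then show ?thesis by simp
  qed
  have hcont: "continuous_on UNIV h"
    unfolding continuous_on_iff
  proof (intro ballI allI impI)
    fix z and r :: real assume "r > 0"
    show "\<exists>d>0. \<forall>z'\<in>UNIV. dist z' z < d \<longrightarrow> dist (h z') (h z) < r"
    proof (rule exI[of _ r], intro conjI ballI impI)
      fix z' assume "dist z' z < r"
      then show "dist (h z') (h z) < r"
        using lip[of z' z] lip[of z z'] by (simp add: dist_real_def dist_commute abs_less_iff)
    qed (use \<open>r > 0\<close> in auto)
  qed
  have fin: "finite {n. dist (X n) z \<le> 1}" for z
  proof (rule ccontr)
    let ?S = "{n. dist (X n) z \<le> 1}"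
    assume inf: "infinite ?S"
    let ?r = "enumerate ?S"
    have sm: "strict_mono ?r" using strict_mono_enumerate[OF inf] .
    have "\<forall>n. (X \<circ> ?r) n \<in> cball z 1"
      using enumerate_in_set[OF inf] by (simp add: dist_commute)
    then obtain l r' where "strict_mono r'" "((X \<circ> ?r) \<circ> r') \<longlonglongrightarrow> l"
      using compact_cball[of z 1] unfolding compact_def by meson
    then have "l \<in> omega_limit f x"
      unfolding omega_limit_def using sm
      by (auto intro!: exI[of _ "?r \<circ> r'"] strict_mono_o simp: comp_def X_def[abs_def])
    then show False using om by simp
  qed
  have hpos: "h z > 0" for z
  proof -
    let ?S = "{n. dist (X (Suc n)) z \<le> 1}"
    have fS: "finite ?S"
      using finite_imageD[OF finite_subset[OF _ fin[of z]], of Suc ?S] by (auto simp: inj_on_def)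
    define m where "m = Min (insert 1 (e ` ?S))"
    have mpos: "m > 0" unfolding m_def using fS e(1) by auto
    have "m \<le> h z" unfolding h_def
    proof (rule cInf_greatest)
      show "range (\<lambda>n. e n + dist z (X (Suc n))) \<noteq> {}" by simp
      fix t assume "t \<in> range (\<lambda>n. e n + dist z (X (Suc n)))"
      then obtain n where t: "t = e n + dist z (X (Suc n))" by auto
      show "m \<le> t"
      proof (cases "n \<in> ?S")
        case True
        then have "m \<le> e n" unfolding m_def using fS by auto
        then show ?thesis using t zero_le_dist[of z "X (Suc n)"] by linarith
      next
        case False
        have "m \<le> 1" unfolding m_def using fS by auto
        then show ?thesis using t False e(1)[of n] by (simp add: dist_commute)
      qed
    qed
    then show ?thesis using mpos by simp
  qed
  show ?thesis
  proof (intro exI[of _ h] conjI allI impI)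
    show "continuous_on UNIV h" by (rule hcont)
    show "0 < h z" for z by (rule hpos)
  next
    fix y assume "y \<noteq> x"
    show "\<exists>n>0. h ((f ^^ n) x) < norm ((f ^^ n) x - (f ^^ n) y)"
    proof (rule ccontr)
      assume "\<not> ?thesis"
      note nt = this
      have "dist ((f ^^ Suc n) y) (X (Suc n)) \<le> e n" for n
      proof -
        have "\<not> h (X (Suc n)) < norm (X (Suc n) - (f ^^ Suc n) y)"
          using nt zero_less_Suc[of n] unfolding X_def by blast
        then show ?thesis using hX[of n] by (simp add: dist_norm norm_minus_commute)
      qed
      then have "y = x" using core[of 0] by blast
      then show False using \<open>y \<noteq> x\<close> by simp
    qed
  next
    fix \<delta> xs n0 w
    assume A: "continuous_on UNIV \<delta> \<and> (\<forall>z. 0 < \<delta> z) \<and> pseudo_orbit f \<delta> xs \<and>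
        (\<forall>n::int. n \<ge> n0 \<longrightarrow> xs n = zpow f n x) \<and> shadows f h xs w"
    let ?M = "nat (max n0 0)"
    have "dist ((f ^^ Suc n) w) (X (Suc n)) \<le> e n" if "n \<ge> ?M" for n
    proof -
      have "int (Suc n) \<ge> n0" using that by linarith
      then have xe: "xs (int (Suc n)) = X (Suc n)" and
        zw: "zpow f (int (Suc n)) w = (f ^^ Suc n) w"
        using A unfolding X_def zpow_def by (simp_all del: of_nat_Suc)
      have "norm (xs (int (Suc n)) - zpow f (int (Suc n)) w) < h (xs (int (Suc n)))"
        using A unfolding shadows_def by blast
      then show ?thesis using xe zw hX[of n] by (simp add: dist_norm norm_minus_commute)
    qed
    then show "w = x" using core by blast
  qed
qed

end
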